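(* Let $m>2$ be a positive integer and let $n,k$ be positive integers. Then: (1) For all $i\in\{0,1,\dots,n-1\}$ and $j\in\{0,1,\dots,k-1\}$, $|\mathrm{WHom}^{ij}(P_m,P_n\square P_k)|=|\mathrm{WHom}^{(n-i-1)j}(P_m,P_n\square P_k)|=|\mathrm{WHom}^{i(k-j-1)}(P_m,P_n\square P_k)|=|\mathrm{WHom}^{(n-i-1)(k-j-1)}(P_m,P_n\square P_k)|$. (2) $|\mathrm{WHom}(P_m,P_{2n}\square P_{2k})|=4\sum_{i=0}^{n-1}\sum_{j=0}^{k-1}|\mathrm{WHom}^{ij}(P_m,P_{2n}\square P_{2k})|$. (3) $|\mathrm{WHom}(P_m,P_{2n+1}\square P_{2k})|=4\sum_{i=0}^{n-1}\sum_{j=0}^{k-1}|\mathrm{WHom}^{ij}(P_m,P_{2n+1}\square P_{2k})|+2\sum_{j=0}^{k-1}|\mathrm{WHom}^{nj}(P_m,P_{2n+1}\square P_{2k})|$. (4) $|\mathrm{WHom}(P_m,P_{2n}\square P_{2k+1})|=4\sum_{i=0}^{n-1}\sum_{j=0}^{k-1}|\mathrm{WHom}^{ij}(P_m,P_{2n}\square P_{2k+1})|+2\sum_{i=0}^{n-1}|\mathrm{WHom}^{ik}(P_m,P_{2n}\square P_{2k+1})|$. (5) $|\mathrm{WHom}(P_m,P_{2n+1}\square P_{2k+1})|=4\sum_{i=0}^{n-1}\sum_{j=0}^{k-1}|\mathrm{WHom}^{ij}(P_m,P_{2n+1}\square P_{2k+1})|+2\sum_{j=0}^{k-1}|\mathrm{WHom}^{nj}(P_m,P_{2n+1}\square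 P_{2k+1})|+2\sum_{i=0}^{n-1}|\mathrm{WHom}^{ik}(P_m,P_{2n+1}\square P_{2k+1})|+|\mathrm{WHom}^{nk}(P_m,P_{2n+1}\square P_{2k+1})|$.
   Context: For a positive integer $n$, $P_n$ denotes the path with vertex set $\{0,1,\dots,n-1\}$ and edge set $\{\{i,i+1\} : i=0,\dots,n-2\}$. The Cartesian product $P_n\square P_k$ has vertex set $\{0,\dots,n-1\}\times\{0,\dots,k-1\}$, with $\{(a,u),(b,v)\}$ an edge iff either $a=b$ and $\{u,v\}\in E(P_k)$, or $\{a,b\}\in E(P_n)$ and $u=v$. A weak homomorphism from a graph $G$ to a graph $H$ is a map $f:V(G)\to V(H)$ such that for every edge $\{x,y\}\in E(G)$, either $f(x)=f(y)$ or $\{f(x),f(y)\}\in E(H)$. $\mathrm{WHom}(G,H)$ is the set of weak homomorphisms from $G$ to $H$, and $\mathrm{WHom}^{ij}(P_m,P_n\square P_k)$ is the set of those $f\in\mathrm{WHom}(P_m,P_n\square P_k)$ with $f(0)=(i,j)$. *)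

theory Defs
  imports Main
begin

definition path_verts :: "nat \<Rightarrow> nat set" where
  "path_verts n = {0..<n}"

definition path_edge :: "nat \<Rightarrow> nat \<Rightarrow> nat \<Rightarrow> bool" where
  "path_edge n u v \<longleftrightarrow> u < n \<and> v < n \<and> (v = u + 1 \<or> u = v + 1)"

definition grid_verts :: "nat \<Rightarrow> nat \<Rightarrow> (nat \<times> nat) set" where
  "grid_verts n k = path_verts n \<times> path_verts k"

definition grid_edge :: "nat \<Rightarrow> nat \<Rightarrow> nat \<times> nat \<Rightarrow> nat \<times> nat \<Rightarrow> bool" where
  "grid_edge n k p q \<longleftrightarrow>
     (fst p = fst q \<and> fst p < n \<and> path_edge k (snd p) (snd q)) \<or>
     (path_edge n (fst p) (fst q) \<and> snd p = snd q \<and> snd p < k)"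

(* Weak homomorphisms P_m \<rightarrow> P_n \<box> P_k, represented as functions on nat that
   are arbitrary-but-fixed (undefined) outside {0..<m}, so that each map
   V(P_m) \<rightarrow> V(P_n \<box> P_k) corresponds to exactly one element. *)
definition WHom :: "nat \<Rightarrow> nat \<Rightarrow> nat \<Rightarrow> (nat \<Rightarrow> nat \<times> nat) set" where
  "WHom m n k = {f. (\<forall>x. x < m \<longrightarrow> f x \<in> grid_verts n k) \<and>
                   (\<forall>x. x \<ge> m \<longrightarrow> f x = undefined) \<and>
                   (\<forall>x y. path_edge m x y \<longrightarrow> f x = f y \<or> grid_edge n k (f x) (f y))}"

definition WHom_at :: "nat \<Rightarrow> nat \<Rightarrow> nat \<Rightarrow> nat \<Rightarrow> nat \<Rightarrow> (nat \<Rightarrow> nat \<times> nat) set" where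
  "WHom_at m n k i j = {f \<in> WHom m n k. f 0 = (i, j)}"

end

theory Submission
  imports Defs "HOL-Library.FuncSet"
begin

definition remap :: "nat \<Rightarrow> (nat \<times> nat \<Rightarrow> nat \<times> nat) \<Rightarrow> (nat \<Rightarrow> nat \<times> nat) \<Rightarrow> (nat \<Rightarrow> nat \<times> nat)" where
  "remap m r f = (\<lambda>x. if x < m then r (f x) else undefined)"

lemma remap_WHom:
  assumes rg: "\<And>p. p \<in> grid_verts n k \<Longrightarrow> r p \<in> grid_verts n k"
    and re: "\<And>p q. p \<in> grid_verts n k \<Longrightarrow> q \<in> grid_verts n k \<Longrightarrow> grid_edge n k p q \<Longrightarrow> grid_edge n k (r p) (r q)"
    and f: "f \<in> WHom m n k"
  shows "remap m r f \<in> WHom m n k"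
proof -
  have A: "\<forall>x. x < m \<longrightarrow> f x \<in> grid_verts n k" using f by (simp add: WHom_def)
  have B: "\<forall>x y. path_edge m x y \<longrightarrow> f x = f y \<or> grid_edge n k (f x) (f y)" using f by (simp add: WHom_def)
  show ?thesis unfolding WHom_def remap_def
  proof (intro CollectI conjI allI impI)
    fix x assume "x < m" then show "(if x < m then r (f x) else undefined) \<in> grid_verts n k"
      using A rg by simp
  next
    fix x :: nat assume "m \<le> x" then show "(if x < m then r (f x) else undefined) = undefined" by simp
  next
    fix x y assume p: "path_edge m x y"
    then have xm: "x < m" and ym: "y < m" by (auto simp: path_edge_def)
    have "f x = f y \<or> grid_edge n k (f x) (f y)" using B p by blast
    moreover have "grid_edge n k (f x) (f y) \<Longrightarrow> grid_edge n k (r (f x)) (r (f y))"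
      using re[of "f x" "f y"] A \<open>x < m\<close> \<open>y < m\<close> by blast
    ultimately show "(if x < m then r (f x) else undefined) = (if y < m then r (f y) else undefined) \<or>
         grid_edge n k (if x < m then r (f x) else undefined) (if y < m then r (f y) else undefined)"
      using xm ym by auto
  qed
qed

lemma remap_card:
  assumes rg: "\<And>p. p \<in> grid_verts n k \<Longrightarrow> r p \<in> grid_verts n k"
    and rr: "\<And>p. p \<in> grid_verts n k \<Longrightarrow> r (r p) = p"
    and re: "\<And>p q. p \<in> grid_verts n k \<Longrightarrow> q \<in> grid_verts n k \<Longrightarrow> grid_edge n k p q \<Longrightarrow> grid_edge n k (r p) (r q)"
    and m: "m > 0"
    and ij: "(i, j) \<in> grid_verts n k"
    and rij: "r (i, j) = (i', j')"
  shows "card (WHom_at m n k i j) = card (WHom_at m n k i' j')"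
proof -
  have inv: "remap m r (remap m r f) = f" if "f \<in> WHom m n k" for f
  proof
    fix x
    show "remap m r (remap m r f) x = f x"
      using that rr by (auto simp: remap_def WHom_def)
  qed
  have "bij_betw (remap m r) (WHom_at m n k i j) (WHom_at m n k i' j')"
  proof (rule bij_betw_byWitness[where f' = "remap m r"])
    show "\<forall>a\<in>WHom_at m n k i j. remap m r (remap m r a) = a"
      using inv by (auto simp: WHom_at_def)
    show "\<forall>a'\<in>WHom_at m n k i' j'. remap m r (remap m r a') = a'"
      using inv by (auto simp: WHom_at_def)
    show "remap m r ` WHom_at m n k i j \<subseteq> WHom_at m n k i' j'"
      using remap_WHom[OF rg re] m rij by (auto simp: WHom_at_def remap_def)
    have "r (i', j') = (i, j)" using rr[OF ij] rij by simp
    then show "remap m r ` WHom_at m n k i' j' \<subseteq> WHom_at m n k i j"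
      using remap_WHom[OF rg re] m by (auto simp: WHom_at_def remap_def)
  qed
  then show ?thesis by (rule bij_betw_same_card)
qed

definition rowflip :: "nat \<Rightarrow> nat \<times> nat \<Rightarrow> nat \<times> nat" where
  "rowflip n p = (n - 1 - fst p, snd p)"
definition colflip :: "nat \<Rightarrow> nat \<times> nat \<Rightarrow> nat \<times> nat" where
  "colflip k p = (fst p, k - 1 - snd p)"

lemma card_row:
  assumes "m > 0" "i < n" "j < k"
  shows "card (WHom_at m n k i j) = card (WHom_at m n k (n - i - 1) j)"
proof (rule remap_card[where r = "rowflip n"])
  show "\<And>p. p \<in> grid_verts n k \<Longrightarrow> rowflip n p \<in> grid_verts n k"
    by (auto simp: rowflip_def grid_verts_def path_verts_def)
  show "\<And>p. p \<in> grid_verts n k \<Longrightarrow> rowflip n (rowflip n p) = p"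
    by (auto simp: rowflip_def grid_verts_def path_verts_def)
  show "\<And>p q. p \<in> grid_verts n k \<Longrightarrow> q \<in> grid_verts n k \<Longrightarrow> grid_edge n k p q \<Longrightarrow> grid_edge n k (rowflip n p) (rowflip n q)"
    by (auto simp: rowflip_def grid_verts_def path_verts_def grid_edge_def path_edge_def)
qed (use assms in \<open>auto simp: rowflip_def grid_verts_def path_verts_def\<close>)

lemma card_col:
  assumes "m > 0" "i < n" "j < k"
  shows "card (WHom_at m n k i j) = card (WHom_at m n k i (k - j - 1))"
proof (rule remap_card[where r = "colflip k"])
  show "\<And>p. p \<in> grid_verts n k \<Longrightarrow> colflip k p \<in> grid_verts n k"
    by (auto simp: colflip_def grid_verts_def path_verts_def)
  show "\<And>p. p \<in> grid_verts n k \<Longrightarrow> colflip k (colflip k p) = p"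
    by (auto simp: colflip_def grid_verts_def path_verts_def)
  show "\<And>p q. p \<in> grid_verts n k \<Longrightarrow> q \<in> grid_verts n k \<Longrightarrow> grid_edge n k p q \<Longrightarrow> grid_edge n k (colflip k p) (colflip k q)"
    by (auto simp: colflip_def grid_verts_def path_verts_def grid_edge_def path_edge_def)
qed (use assms in \<open>auto simp: colflip_def grid_verts_def path_verts_def\<close>)

lemma WHom_finite: "finite (WHom m n k)"
proof (rule finite_subset)
  show "WHom m n k \<subseteq> PiE {0..<m} (\<lambda>_. grid_verts n k)"
    by (auto simp: WHom_def PiE_def extensional_def)
  show "finite (PiE {0..<m} (\<lambda>_. grid_verts n k))"
    by (rule finite_PiE) (auto simp: grid_verts_def path_verts_def)
qed

lemma card_WHom_sum:
  assumes "m > 0"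
  shows "card (WHom m n k) = (\<Sum>i<n. \<Sum>j<k. card (WHom_at m n k i j))"
proof -
  have eq: "WHom m n k = (\<Union>p\<in>grid_verts n k. WHom_at m n k (fst p) (snd p))"
    using assms by (auto simp: WHom_def WHom_at_def)
  have "card (WHom m n k) = (\<Sum>p\<in>grid_verts n k. card (WHom_at m n k (fst p) (snd p)))"
    unfolding eq
    by (rule card_UN_disjoint)
       (auto simp: grid_verts_def path_verts_def WHom_at_def intro: finite_subset[OF _ WHom_finite])
  also have "\<dots> = (\<Sum>i<n. \<Sum>j<k. card (WHom_at m n k i j))"
    by (simp add: grid_verts_def path_verts_def atLeast0LessThan sum.cartesian_product split_def)
  finally show ?thesis .
qed

lemma sum_split_nat: "(\<Sum>i<a+b. (g::nat\<Rightarrow>nat) i) = (\<Sum>i<a. g i) + (\<Sum>i<b. g (a+i))"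
  by (induction b) auto

lemma sum_sym_even:
  assumes "\<And>i. i < 2*n \<Longrightarrow> (g::nat\<Rightarrow>nat) i = g (2*n - 1 - i)"
  shows "(\<Sum>i<2*n. g i) = 2 * (\<Sum>i<n. g i)"
proof -
  have "(\<Sum>i<2*n. g i) = (\<Sum>i<n. g i) + (\<Sum>i<n. g (n+i))"
    using sum_split_nat[where a=n and b=n and g=g] by (simp add: mult_2)
  also have "(\<Sum>i<n. g (n+i)) = (\<Sum>i<n. g (n - Suc i))"
  proof (rule sum.cong)
    fix i assume "i \<in> {..<n}"
    then have "g (n + i) = g (2*n - 1 - (n + i))" using assms[of "n + i"] by simp
    also have "2*n - 1 - (n + i) = n - Suc i" by simp
    finally show "g (n + i) = g (n - Suc i)" .
  qed simp
  also have "\<dots> = (\<Sum>i<n. g i)" by (rule sum.nat_diff_reindex)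
  finally show ?thesis by simp
qed

lemma sum_sym_odd:
  assumes "\<And>i. i < 2*n+1 \<Longrightarrow> (g::nat\<Rightarrow>nat) i = g (2*n - i)"
  shows "(\<Sum>i<2*n+1. g i) = 2 * (\<Sum>i<n. g i) + g n"
proof -
  have "(\<Sum>i<2*n+1. g i) = (\<Sum>i<n. g i) + (\<Sum>i<Suc n. g (n+i))"
    using sum_split_nat[where a=n and b="Suc n" and g=g] by (simp add: mult_2)
  also have "(\<Sum>i<Suc n. g (n+i)) = g n + (\<Sum>i<n. g (n + Suc i))"
    using sum.lessThan_Suc_shift[of "\<lambda>i. g (n+i)" n] by simp
  also have "(\<Sum>i<n. g (n + Suc i)) = (\<Sum>i<n. g (n - Suc i))"
  proof (rule sum.cong)
    fix i assume "i \<in> {..<n}"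
    then have "g (n + Suc i) = g (2*n - (n + Suc i))" using assms[of "n + Suc i"] by simp
    also have "2*n - (n + Suc i) = n - Suc i" by simp
    finally show "g (n + Suc i) = g (n - Suc i)" .
  qed simp
  also have "\<dots> = (\<Sum>i<n. g i)" by (rule sum.nat_diff_reindex)
  finally show ?thesis by simp
qed

theorem lemma1:
  fixes m n k :: nat
  assumes "m > 2" and "n > 0" and "k > 0"
  shows
   "(\<forall>i<n. \<forall>j<k.
       card (WHom_at m n k i j) = card (WHom_at m n k (n - i - 1) j) \<and>
       card (WHom_at m n k (n - i - 1) j) = card (WHom_at m n k i (k - j - 1)) \<and>
       card (WHom_at m n k i (k - j - 1)) = card (WHom_at m n k (n - i - 1) (k - j - 1)))
    \<and> card (WHom m (2*n) (2*k)) =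
        4 * (\<Sum>i<n. \<Sum>j<k. card (WHom_at m (2*n) (2*k) i j))
    \<and> card (WHom m (2*n+1) (2*k)) =
        4 * (\<Sum>i<n. \<Sum>j<k. card (WHom_at m (2*n+1) (2*k) i j))
        + 2 * (\<Sum>j<k. card (WHom_at m (2*n+1) (2*k) n j))
    \<and> card (WHom m (2*n) (2*k+1)) =
        4 * (\<Sum>i<n. \<Sum>j<k. card (WHom_at m (2*n) (2*k+1) i j))
        + 2 * (\<Sum>i<n. card (WHom_at m (2*n) (2*k+1) i k))
    \<and> card (WHom m (2*n+1) (2*k+1)) =
        4 * (\<Sum>i<n. \<Sum>j<k. card (WHom_at m (2*n+1) (2*k+1) i j))
        + 2 * (\<Sum>j<k. card (WHom_at m (2*n+1) (2*k+1) n j))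
        + 2 * (\<Sum>i<n. card (WHom_at m (2*n+1) (2*k+1) i k))
        + card (WHom_at m (2*n+1) (2*k+1) n k)"
proof -
  have m0: "m > 0" using assms by simp
  have sym: "card (WHom_at m N K i j) = card (WHom_at m N K (N - i - 1) j)
           \<and> card (WHom_at m N K i j) = card (WHom_at m N K i (K - j - 1))"
    if "i < N" "j < K" for N K i j
    using card_row[OF m0 that] card_col[OF m0 that] by simp
  have P1: "\<forall>i<n. \<forall>j<k.
       card (WHom_at m n k i j) = card (WHom_at m n k (n - i - 1) j) \<and>
       card (WHom_at m n k (n - i - 1) j) = card (WHom_at m n k i (k - j - 1)) \<and>
       card (WHom_at m n k i (k - j - 1)) = card (WHom_at m n k (n - i - 1) (k - j - 1))"
  proof (intro allI impI)
    fix i j assume ij: "i < n" "j < k"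
    have "n - i - 1 < n" using ij by simp
    then show "card (WHom_at m n k i j) = card (WHom_at m n k (n - i - 1) j) \<and>
       card (WHom_at m n k (n - i - 1) j) = card (WHom_at m n k i (k - j - 1)) \<and>
       card (WHom_at m n k i (k - j - 1)) = card (WHom_at m n k (n - i - 1) (k - j - 1))"
      using sym[OF ij] sym[of "n - i - 1" n j k] ij by simp
  qed
  have rowsym: "(\<Sum>j<K. card (WHom_at m N K i j)) = (\<Sum>j<K. card (WHom_at m N K (N - 1 - i) j))"
    if "i < N" for N K i
  proof (rule sum.cong)
    fix j assume "j \<in> {..<K}"
    then have "j < K" by simp
    have "N - 1 - i = N - i - 1" by simp
    then show "card (WHom_at m N K i j) = card (WHom_at m N K (N - 1 - i) j)"
      using conjunct1[OF sym[OF that \<open>j < K\<close>]] by simp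
  qed simp
  have colsym: "card (WHom_at m N K i j) = card (WHom_at m N K i (K - 1 - j))"
    if "i < N" "j < K" for N K i j
  proof -
    have "K - 1 - j = K - j - 1" by simp
    then show ?thesis using conjunct2[OF sym[OF that]] by simp
  qed
  have E: "(\<Sum>i<2*a. g i) = 2 * (\<Sum>i<a. g i)" if "\<And>i. i < 2*a \<Longrightarrow> g i = g (2*a - 1 - i)" for a :: nat and g :: "nat \<Rightarrow> nat"
    using sum_sym_even[of a g] that by blast
  have O: "(\<Sum>i<2*a+1. g i) = 2 * (\<Sum>i<a. g i) + g a" if "\<And>i. i < 2*a+1 \<Longrightarrow> g i = g (2*a - i)" for a :: nat and g :: "nat \<Rightarrow> nat"
    using sum_sym_odd[of a g] that by blast
  have inE: "(\<Sum>j<2*k. card (WHom_at m N (2*k) i j)) = 2 * (\<Sum>j<k. card (WHom_at m N (2*k) i j))"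
    if "i < N" for N i
  proof (rule E)
    fix j assume "j < 2*k"
    then show "card (WHom_at m N (2*k) i j) = card (WHom_at m N (2*k) i (2*k - 1 - j))"
      using colsym[OF that, of j] by simp
  qed
  have inO: "(\<Sum>j<2*k+1. card (WHom_at m N (2*k+1) i j)) = 2 * (\<Sum>j<k. card (WHom_at m N (2*k+1) i j)) + card (WHom_at m N (2*k+1) i k)"
    if "i < N" for N i
  proof (rule O)
    fix j assume "j < 2*k+1"
    then show "card (WHom_at m N (2*k+1) i j) = card (WHom_at m N (2*k+1) i (2*k - j))"
      using colsym[OF that, of j] by simp
  qed
  have outE: "(\<Sum>i<2*n. \<Sum>j<K. card (WHom_at m (2*n) K i j)) = 2 * (\<Sum>i<n. \<Sum>j<K. card (WHom_at m (2*n) K i j))" for K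
  proof (rule E)
    fix i assume "i < 2*n"
    then show "(\<Sum>j<K. card (WHom_at m (2*n) K i j)) = (\<Sum>j<K. card (WHom_at m (2*n) K (2*n - 1 - i) j))"
      using rowsym[of i "2*n" K] by simp
  qed
  have outO: "(\<Sum>i<2*n+1. \<Sum>j<K. card (WHom_at m (2*n+1) K i j)) = 2 * (\<Sum>i<n. \<Sum>j<K. card (WHom_at m (2*n+1) K i j)) + (\<Sum>j<K. card (WHom_at m (2*n+1) K n j))" for K
  proof (rule O)
    fix i assume "i < 2*n+1"
    then show "(\<Sum>j<K. card (WHom_at m (2*n+1) K i j)) = (\<Sum>j<K. card (WHom_at m (2*n+1) K (2*n - i) j))"
      using rowsym[of i "2*n+1" K] by simp
  qed
  have cs: "card (WHom m N K) = (\<Sum>i<N. \<Sum>j<K. card (WHom_at m N K i j))" for N K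
    by (rule card_WHom_sum[OF m0])
  have innE: "(\<Sum>i<a. \<Sum>j<2*k. card (WHom_at m N (2*k) i j)) = 2 * (\<Sum>i<a. \<Sum>j<k. card (WHom_at m N (2*k) i j))"
    if "a \<le> N" for a N
  proof -
    have "(\<Sum>i<a. \<Sum>j<2*k. card (WHom_at m N (2*k) i j)) = (\<Sum>i<a. 2 * (\<Sum>j<k. card (WHom_at m N (2*k) i j)))"
      by (rule sum.cong) (use that inE in auto)
    then show ?thesis by (simp add: sum_distrib_left)
  qed
  have innO: "(\<Sum>i<a. \<Sum>j<2*k+1. card (WHom_at m N (2*k+1) i j)) = 2 * (\<Sum>i<a. \<Sum>j<k. card (WHom_at m N (2*k+1) i j)) + (\<Sum>i<a. card (WHom_at m N (2*k+1) i k))"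
    if "a \<le> N" for a N
  proof -
    have "(\<Sum>i<a. \<Sum>j<2*k+1. card (WHom_at m N (2*k+1) i j)) = (\<Sum>i<a. 2 * (\<Sum>j<k. card (WHom_at m N (2*k+1) i j)) + card (WHom_at m N (2*k+1) i k))"
      by (rule sum.cong) (use that inO in auto)
    then show ?thesis by (simp add: sum_distrib_left sum.distrib)
  qed
  have P2: "card (WHom m (2*n) (2*k)) = 4 * (\<Sum>i<n. \<Sum>j<k. card (WHom_at m (2*n) (2*k) i j))"
    unfolding cs outE using innE[of n "2*n"] by simp
  have P3: "card (WHom m (2*n+1) (2*k)) =
        4 * (\<Sum>i<n. \<Sum>j<k. card (WHom_at m (2*n+1) (2*k) i j))
        + 2 * (\<Sum>j<k. card (WHom_at m (2*n+1) (2*k) n j))"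
    unfolding cs outO using innE[of n "2*n+1"] inE[of n "2*n+1"] by simp
  have P4: "card (WHom m (2*n) (2*k+1)) =
        4 * (\<Sum>i<n. \<Sum>j<k. card (WHom_at m (2*n) (2*k+1) i j))
        + 2 * (\<Sum>i<n. card (WHom_at m (2*n) (2*k+1) i k))"
    unfolding cs outE using innO[of n "2*n"] by simp
  have P5: "card (WHom m (2*n+1) (2*k+1)) =
        4 * (\<Sum>i<n. \<Sum>j<k. card (WHom_at m (2*n+1) (2*k+1) i j))
        + 2 * (\<Sum>j<k. card (WHom_at m (2*n+1) (2*k+1) n j))
        + 2 * (\<Sum>i<n. card (WHom_at m (2*n+1) (2*k+1) i k))
        + card (WHom_at m (2*n+1) (2*k+1) n k)"
    unfolding cs outO using innO[of n "2*n+1"] inO[of n "2*n+1"] by simp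
  show ?thesis using P1 P2 P3 P4 P5 by blast
qed

end
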